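(* If $A\in\mathbb{R}^{n\times n}$ is almost semimonotone, then $A$ is not a Karamardian matrix.
   Context: $A$ is semimonotone if for every $x$ with $0\ne x\ge 0$ there is an index $k$ with $x_k>0$ and $(Ax)_k\ge 0$. $A$ is almost semimonotone if every proper principal submatrix of $A$ is semimonotone but $A$ itself is not semimonotone. For $M\in\mathbb{R}^{n\times n}$ let $K_M=\mathbb{R}^n_+\cap R(M)$ and $K_M^*=\{y: x^Ty\ge 0\ \forall x\in K_M\}$ (one has $K_M^*=\mathbb{R}^n_++N(M^T)$, with interior $\{a+b: a>0,\ b\in N(M^T)\}$). For $q$, LCP$(M,K_M,q)$ is to find $x\in K_M$ with $Mx+q\in K_M^*$ and $x^T(Mx+q)=0$. $M$ is a Karamardian matrix if $K_M\ne\{0\}$ and there exists $d$ in the interior of $K_M^*$ such that both LCP$(M,K_M,0)$ and LCP$(M,K_M,d)$ have $x=0$ as their only solution. *)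

theory Defs
  imports "HOL-Analysis.Analysis"
begin

definition nonneg :: "real^'n \<Rightarrow> bool" where
  "nonneg x \<longleftrightarrow> (\<forall>i. 0 \<le> x $ i)"

(* The principal submatrix A[I] is semimonotone: for every x \<ge> 0, x \<noteq> 0,
   supported on I (i.e. a nonzero nonnegative vector of R^I), there is k \<in> I
   with x_k > 0 and (A[I] x)_k = (\<Sum>j\<in>I. A_kj x_j) \<ge> 0. *)
definition semimonotone_on :: "'n::finite set \<Rightarrow> real^'n^'n \<Rightarrow> bool" where
  "semimonotone_on I A \<longleftrightarrow>
     (\<forall>x::real^'n. nonneg x \<and> x \<noteq> 0 \<and> (\<forall>i. i \<notin> I \<longrightarrow> x $ i = 0) \<longrightarrow>
        (\<exists>k\<in>I. x $ k > 0 \<and> (\<Sum>j\<in>I. A $ k $ j * x $ j) \<ge> 0))"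

definition semimonotone :: "real^'n::finite^'n \<Rightarrow> bool" where
  "semimonotone A \<longleftrightarrow>
     (\<forall>x::real^'n. nonneg x \<and> x \<noteq> 0 \<longrightarrow> (\<exists>k. x $ k > 0 \<and> (A *v x) $ k \<ge> 0))"

definition almost_semimonotone :: "real^'n::finite^'n \<Rightarrow> bool" where
  "almost_semimonotone A \<longleftrightarrow>
     (\<forall>I. I \<noteq> {} \<and> I \<subset> UNIV \<longrightarrow> semimonotone_on I A) \<and> \<not> semimonotone A"

definition KM :: "real^'n::finite^'n \<Rightarrow> (real^'n) set" where
  "KM M = {x. nonneg x} \<inter> range (\<lambda>y. M *v y)"

definition dual_cone :: "(real^'n::finite) set \<Rightarrow> (real^'n) set" where
  "dual_cone K = {y. \<forall>x\<in>K. 0 \<le> x \<bullet> y}"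

definition LCP_sol :: "real^'n::finite^'n \<Rightarrow> (real^'n) set \<Rightarrow> real^'n \<Rightarrow> (real^'n) set" where
  "LCP_sol M K q = {x. x \<in> K \<and> M *v x + q \<in> dual_cone K \<and> x \<bullet> (M *v x + q) = 0}"

definition karamardian :: "real^'n::finite^'n \<Rightarrow> bool" where
  "karamardian M \<longleftrightarrow> KM M \<noteq> {0} \<and>
     (\<exists>d\<in>interior (dual_cone (KM M)).
        LCP_sol M (KM M) 0 = {0} \<and> LCP_sol M (KM M) d = {0})"

end

theory Submission
  imports Defs
begin

lemma supp_full:
  fixes A :: "real^'n::finite^'n"
  assumes as: "almost_semimonotone A"
    and u: "nonneg u" "u \<noteq> 0" "\<And>k. u $ k > 0 \<Longrightarrow> (A *v u) $ k < 0"
  shows "u $ i > 0"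
proof (rule ccontr)
  assume ni: "\<not> u $ i > 0"
  define I where "I = {j. u $ j > 0}"
  have z: "\<And>j. j \<notin> I \<Longrightarrow> u $ j = 0" using u(1) unfolding I_def nonneg_def
    by (metis less_eq_real_def mem_Collect_eq)
  have "I \<noteq> {}"
  proof
    assume "I = {}"
    then have "u = 0" using z by (simp add: vec_eq_iff)
    then show False using u(2) by simp
  qed
  moreover have "I \<subset> UNIV" using ni I_def by auto
  ultimately have "semimonotone_on I A" using as unfolding almost_semimonotone_def by blast
  then obtain k where k: "k \<in> I" "u $ k > 0" "(\<Sum>j\<in>I. A $ k $ j * u $ j) \<ge> 0"
    using u z unfolding semimonotone_on_def by blast
  have "(A *v u) $ k = (\<Sum>j\<in>UNIV. A $ k $ j * u $ j)"
    by (simp add: matrix_vector_mult_def)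
  also have "\<dots> = (\<Sum>j\<in>I. A $ k $ j * u $ j)"
    by (rule sum.mono_neutral_right) (auto simp: z)
  finally show False using k u(3)[OF k(2)] by simp
qed

lemma boundary:
  fixes A :: "real^'n::finite^'n"
  assumes as: "almost_semimonotone A"
    and x: "\<And>i. x $ i > 0" "\<And>i. (A *v x) $ i < 0"
    and v: "\<And>i. (A *v v) $ i \<le> 0"
  shows "nonneg v"
proof (rule ccontr)
  assume "\<not> nonneg v"
  then obtain j0 where j0: "v $ j0 < 0" unfolding nonneg_def by (auto simp: not_le)
  define S where "S = {i. v $ i < 0}"
  have Sne: "S \<noteq> {}" "finite S" using j0 S_def by auto
  define s where "s = Min ((\<lambda>i. x $ i / (- v $ i)) ` S)"
  have "s \<in> (\<lambda>i. x $ i / (- v $ i)) ` S"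
    unfolding s_def using Sne by (intro Min_in) auto
  then obtain j where j: "j \<in> S" "s = x $ j / (- v $ j)" by blast
  have sle: "\<And>i. i \<in> S \<Longrightarrow> s \<le> x $ i / (- v $ i)"
    using Sne s_def by auto
  have spos: "s > 0" using j x(1)[of j] S_def by (auto simp: divide_pos_neg)
  define u where "u = x + s *\<^sub>R v"
  have uc: "\<And>i. u $ i = x $ i + s * v $ i" by (simp add: u_def)
  have unn: "\<And>i. u $ i \<ge> 0"
  proof -
    fix i
    show "u $ i \<ge> 0"
    proof (cases "i \<in> S")
      case True
      then have "v $ i < 0" by (simp add: S_def)
      with sle[OF True] have "s * (- v $ i) \<le> x $ i" by (simp add: field_simps)
      then show ?thesis by (simp add: uc algebra_simps)
    next
      case False
      then have "v $ i \<ge> 0" by (simp add: S_def)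
      then show ?thesis using x(1)[of i] spos by (simp add: uc add_nonneg_nonneg less_imp_le)
    qed
  qed
  have uj: "u $ j = 0" using j S_def by (simp add: uc field_simps)
  have Au: "\<And>i. (A *v u) $ i < 0"
  proof -
    fix i
    have "(A *v u) $ i = (A *v x) $ i + s * (A *v v) $ i"
      by (simp add: u_def matrix_vector_right_distrib matrix_vector_mult_scaleR)
    moreover have "s * (A *v v) $ i \<le> 0" using spos v[of i] by (simp add: mult_nonneg_nonpos)
    ultimately show "(A *v u) $ i < 0" using x(2)[of i] by linarith
  qed
  have "u \<noteq> 0"
  proof
    assume "u = 0"
    then show False using Au[of j] by simp
  qed
  then have "u $ j > 0"
    using supp_full[OF as, of u j] unn Au by (auto simp: nonneg_def)
  then show False using uj by simp
qed

theorem mainTheorem15: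
  fixes A :: "real^'n::finite^'n"
  assumes "almost_semimonotone A"
  shows "\<not> karamardian A"
proof
  assume kar: "karamardian A"
  have ns: "\<not> semimonotone A" using assms unfolding almost_semimonotone_def by blast
  then obtain x where x0: "nonneg x" "x \<noteq> 0" "\<And>k. x $ k > 0 \<Longrightarrow> (A *v x) $ k < 0"
    unfolding semimonotone_def by (auto simp: not_le)
  have xp: "\<And>i. x $ i > 0" using supp_full[OF assms x0] by blast
  have Axn: "\<And>i. (A *v x) $ i < 0" using xp x0(3) by blast
  have injA: "inj ((*v) A)"
  proof (rule linear_injective_0[THEN iffD2])
    show "linear ((*v) A)" by (rule matrix_vector_mul_linear)
    show "\<forall>v. A *v v = 0 \<longrightarrow> v = 0"
    proof (intro allI impI)
      fix v assume Av: "A *v v = 0"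
      have "nonneg v" by (rule boundary[OF assms xp Axn]) (simp add: Av)
      moreover have "nonneg (- v)" by (rule boundary[OF assms xp Axn]) (metis Av matrix_vector_mult_diff_distrib[of A 0 v] matrix_vector_mult_0_right diff_0 minus_zero order.refl zero_index)
      ultimately show "v = 0" unfolding nonneg_def
        by (simp add: vec_eq_iff) (meson antisym neg_0_le_iff_le)
    qed
  qed
  have surjA: "surj ((*v) A)"
    by (simp add: linear_injective_imp_surjective injA)
  have K: "KM A = {x. nonneg x}" unfolding KM_def using surjA by auto
  obtain d where d: "d \<in> interior (dual_cone (KM A))" "LCP_sol A (KM A) d = {0}"
    using kar unfolding karamardian_def by blast
  have axK: "\<And>i. axis i 1 \<in> KM A" unfolding K nonneg_def by (simp add: axis_def)
  have dK: "d \<in> dual_cone (KM A)" using d(1) interior_subset by blast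
  have dnn: "\<And>i. d $ i \<ge> 0"
  proof -
    fix i
    have "0 \<le> axis i 1 \<bullet> d" using dK axK[of i] unfolding dual_cone_def by blast
    then show "d $ i \<ge> 0" by (simp add: inner_axis')
  qed
  have dnz: "d \<noteq> 0"
  proof
    assume "d = 0"
    with d(1) obtain e where e: "e > 0" "ball 0 e \<subseteq> dual_cone (KM A)"
      using mem_interior by blast
    obtain i :: 'n where True by blast
    have "(- (e/2)) *\<^sub>R axis i (1::real) \<in> ball 0 e" using e(1) unfolding mem_ball dist_0_norm norm_scaleR norm_axis_1 by simp
    then have "(- (e/2)) *\<^sub>R axis i (1::real) \<in> dual_cone (KM A)" using e(2) by blast
    then have "0 \<le> axis i 1 \<bullet> ((- (e/2)) *\<^sub>R axis i (1::real))"
      using axK[of i] unfolding dual_cone_def by blast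
    then show False using e(1) by (simp add: inner_axis')
  qed
  obtain z where z: "A *v z = - d" using surjA by (metis surjE)
  have znn: "nonneg z" by (rule boundary[OF assms xp Axn]) (simp add: z dnn)
  have zK: "z \<in> KM A" using znn K by simp
  have "z \<in> LCP_sol A (KM A) d"
    unfolding LCP_sol_def dual_cone_def using zK z by simp
  moreover have "z \<noteq> 0" using z dnz by auto
  ultimately show False using d(2) by blast
qed

end
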